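(* Let $I$ be a nonempty directed set and let $\{\Delta_i\}_{i\in I}$ be a family of theories in a signature $\sigma$ such that each $\Delta_i$ is consistent and complete. Then $\liminf_I \Delta_i$ is consistent and $\limsup_I \Delta_i$ is complete. Moreover, the following are equivalent: (1) $\limsup_I \Delta_i$ is consistent; (2) $\liminf_I \Delta_i$ is complete; (3) $\lim_I \Delta_i$ exists.
   Context: Fix a first-order signature $\sigma$ and let $\mathrm{Sent}(\sigma)$ be the set of first-order sentences over $\sigma$ (with equality). A theory is a set $\Delta\subseteq \mathrm{Sent}(\sigma)$ such that $\Delta\vdash\theta$ implies $\theta\in\Delta$. A set of sentences is consistent if no contradiction is derivable from it (equivalently, its set of logical consequences is not all of $\mathrm{Sent}(\sigma)$), and complete if for every $\theta\in\mathrm{Sent}(\sigma)$ at least one of $\theta$, $\neg\theta$ belongs to it. A directed set is a partially ordered set $I$ such that any two elements have a common upper bound. For a family $\{\Delta_i\}_{i\in I}$ of sets of sentences indexed by a directed set $I$: $\limsup_I \Delta_i=\{\theta\in\mathrm{Sent}(\sigma): \forall i\in I\ \exists j\ge i\ [\theta\in\Delta_j]\}$, $\liminf_I \Delta_i=\{\theta\in\mathrm{Sent}(\sigma): \exists i\in I\ \forall j\ge i\ [\theta\in\Delta_j]\}$. We say $\lim_I\Delta_i$ exists and equals $\Delta$ if $\limsup_I\Delta_i=\liminf_I\Delta_i=\Delta$. *)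

theory Defs
  imports Main
begin

text \<open>The signature sigma is given by the types 'f (function symbols) and 'p (relation
symbols); a symbol applied to a list of arguments of length n is an n-ary occurrence.\<close>

datatype 'f trm = Var nat | Fun 'f "'f trm list"

datatype ('f, 'p) fm =
    Bot
  | Eq "'f trm" "'f trm"
  | Pred 'p "'f trm list"
  | Imp "('f, 'p) fm" "('f, 'p) fm"
  | Forall "('f, 'p) fm"

definition Neg :: "('f, 'p) fm \<Rightarrow> ('f, 'p) fm" where
  "Neg \<phi> = Imp \<phi> Bot"

primrec liftt :: "nat \<Rightarrow> 'f trm \<Rightarrow> 'f trm" where
  "liftt k (Var i) = (if i < k then Var i else Var (Suc i))"
| "liftt k (Fun f ts) = Fun f (map (liftt k) ts)"

primrec liftf :: "nat \<Rightarrow> ('f, 'p) fm \<Rightarrow> ('f, 'p) fm" where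
  "liftf k Bot = Bot"
| "liftf k (Eq s t) = Eq (liftt k s) (liftt k t)"
| "liftf k (Pred p ts) = Pred p (map (liftt k) ts)"
| "liftf k (Imp a b) = Imp (liftf k a) (liftf k b)"
| "liftf k (Forall a) = Forall (liftf (Suc k) a)"

primrec substt :: "nat \<Rightarrow> 'f trm \<Rightarrow> 'f trm \<Rightarrow> 'f trm" where
  "substt k s (Var i) = (if i < k then Var i else if i = k then s else Var (i - 1))"
| "substt k s (Fun f ts) = Fun f (map (substt k s) ts)"

primrec substf :: "nat \<Rightarrow> 'f trm \<Rightarrow> ('f, 'p) fm \<Rightarrow> ('f, 'p) fm" where
  "substf k s Bot = Bot"
| "substf k s (Eq a b) = Eq (substt k s a) (substt k s b)"
| "substf k s (Pred p ts) = Pred p (map (substt k s) ts)"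
| "substf k s (Imp a b) = Imp (substf k s a) (substf k s b)"
| "substf k s (Forall a) = Forall (substf (Suc k) (liftt 0 s) a)"

primrec closedt :: "nat \<Rightarrow> 'f trm \<Rightarrow> bool" where
  "closedt k (Var i) = (i < k)"
| "closedt k (Fun f ts) = list_all (closedt k) ts"

primrec closedf :: "nat \<Rightarrow> ('f, 'p) fm \<Rightarrow> bool" where
  "closedf k Bot = True"
| "closedf k (Eq a b) = (closedt k a \<and> closedt k b)"
| "closedf k (Pred p ts) = (\<forall>t\<in>set ts. closedt k t)"
| "closedf k (Imp a b) = (closedf k a \<and> closedf k b)"
| "closedf k (Forall a) = closedf (Suc k) a"

definition Sent :: "('f, 'p) fm set" where
  "Sent = {\<phi>. closedf 0 \<phi>}"

inductive derivable :: "('f, 'p) fm set \<Rightarrow> ('f, 'p) fm \<Rightarrow> bool" (infix "\<turnstile>" 50)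
  for \<Gamma> :: "('f, 'p) fm set" where
  hyp: "\<phi> \<in> \<Gamma> \<Longrightarrow> \<Gamma> \<turnstile> \<phi>"
| ax1: "\<Gamma> \<turnstile> Imp a (Imp b a)"
| ax2: "\<Gamma> \<turnstile> Imp (Imp a (Imp b c)) (Imp (Imp a b) (Imp a c))"
| ax3: "\<Gamma> \<turnstile> Imp (Imp (Imp a Bot) Bot) a"
| ax_inst: "\<Gamma> \<turnstile> Imp (Forall a) (substf 0 t a)"
| ax_dist: "\<Gamma> \<turnstile> Imp (Forall (Imp (liftf 0 a) b)) (Imp a (Forall b))"
| ax_refl: "\<Gamma> \<turnstile> Eq t t"
| ax_leib: "\<Gamma> \<turnstile> Imp (Eq s t) (Imp (substf 0 s a) (substf 0 t a))"
| mp: "\<Gamma> \<turnstile> Imp a b \<Longrightarrow> \<Gamma> \<turnstile> a \<Longrightarrow> \<Gamma> \<turnstile> b"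
| gen: "\<forall>\<psi>\<in>\<Gamma>. closedf 0 \<psi> \<Longrightarrow> \<Gamma> \<turnstile> a \<Longrightarrow> \<Gamma> \<turnstile> Forall a"

definition is_theory :: "('f, 'p) fm set \<Rightarrow> bool" where
  "is_theory \<Delta> \<longleftrightarrow> \<Delta> \<subseteq> Sent \<and> (\<forall>\<theta>\<in>Sent. \<Delta> \<turnstile> \<theta> \<longrightarrow> \<theta> \<in> \<Delta>)"

definition consistent :: "('f, 'p) fm set \<Rightarrow> bool" where
  "consistent \<Delta> \<longleftrightarrow> \<not> (\<Delta> \<turnstile> Bot)"

definition complete :: "('f, 'p) fm set \<Rightarrow> bool" where
  "complete \<Delta> \<longleftrightarrow> (\<forall>\<theta>\<in>Sent. \<theta> \<in> \<Delta> \<or> Neg \<theta> \<in> \<Delta>)"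

definition directed :: "'i::order set \<Rightarrow> bool" where
  "directed I \<longleftrightarrow> (\<forall>i\<in>I. \<forall>j\<in>I. \<exists>k\<in>I. i \<le> k \<and> j \<le> k)"

definition lim_sup :: "'i::order set \<Rightarrow> ('i \<Rightarrow> ('f, 'p) fm set) \<Rightarrow> ('f, 'p) fm set" where
  "lim_sup I \<Delta> = {\<theta>\<in>Sent. \<forall>i\<in>I. \<exists>j\<in>I. i \<le> j \<and> \<theta> \<in> \<Delta> j}"

definition lim_inf :: "'i::order set \<Rightarrow> ('i \<Rightarrow> ('f, 'p) fm set) \<Rightarrow> ('f, 'p) fm set" where
  "lim_inf I \<Delta> = {\<theta>\<in>Sent. \<exists>i\<in>I. \<forall>j\<in>I. i \<le> j \<longrightarrow> \<theta> \<in> \<Delta> j}"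

definition lim_exists :: "'i::order set \<Rightarrow> ('i \<Rightarrow> ('f, 'p) fm set) \<Rightarrow> bool" where
  "lim_exists I \<Delta> \<longleftrightarrow> lim_sup I \<Delta> = lim_inf I \<Delta>"

end

theory Submission
  imports Defs
begin

lemma deriv_mono:
  assumes "\<Gamma> \<turnstile> \<phi>" "\<Gamma> \<subseteq> \<Gamma>'" "\<Gamma>' \<subseteq> Sent"
  shows "\<Gamma>' \<turnstile> \<phi>"
  using assms
proof (induction rule: derivable.induct)
  case (hyp \<phi>) then show ?case by (blast intro: derivable.hyp)
next
  case (mp a b) then show ?case by (blast intro: derivable.mp)
next
  case (gen a) then show ?case by (auto simp: Sent_def intro!: derivable.gen)
qed (auto intro: derivable.intros)

lemma deriv_finite:
  assumes "\<Gamma> \<turnstile> \<phi>" "\<Gamma> \<subseteq> Sent"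
  shows "\<exists>\<Gamma>0. finite \<Gamma>0 \<and> \<Gamma>0 \<subseteq> \<Gamma> \<and> \<Gamma>0 \<turnstile> \<phi>"
  using assms
proof (induction rule: derivable.induct)
  case (hyp \<phi>)
  then show ?case by (intro exI[of _ "{\<phi>}"]) (auto intro: derivable.hyp)
next
  case (mp a b)
  then obtain A B where A: "finite A" "A \<subseteq> \<Gamma>" "A \<turnstile> Imp a b"
    and B: "finite B" "B \<subseteq> \<Gamma>" "B \<turnstile> a" by blast
  have "A \<union> B \<turnstile> Imp a b" "A \<union> B \<turnstile> a"
    using A B mp.prems by (auto intro: deriv_mono)
  then have "A \<union> B \<turnstile> b" by (rule derivable.mp)
  then show ?case using A B by blast
next
  case (gen a)
  then obtain A where A: "finite A" "A \<subseteq> \<Gamma>" "A \<turnstile> a" by blast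
  have "A \<turnstile> Forall a" using A gen.hyps(1) by (blast intro: derivable.gen)
  then show ?case using A by blast
qed (rule exI[of _ "{}"], simp add: derivable.intros)+

lemma directed_finite_ub:
  assumes "I \<noteq> {}" "directed I" "finite F" "F \<subseteq> I"
  shows "\<exists>k\<in>I. \<forall>i\<in>F. i \<le> k"
  using assms(3,4)
proof (induction F rule: finite_induct)
  case empty then show ?case using assms(1) by blast
next
  case (insert x F)
  then obtain k where k: "k \<in> I" "\<forall>i\<in>F. i \<le> k" by blast
  obtain m where "m \<in> I" "x \<le> m" "k \<le> m"
    using assms(2) insert.prems k unfolding directed_def by blast
  then show ?case using k by (auto intro: order_trans)
qed

lemma Neg_Sent: "\<theta> \<in> Sent \<Longrightarrow> Neg \<theta> \<in> Sent"
  by (simp add: Sent_def Neg_def)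

theorem lemma2p2:
  fixes I :: "'i::order set" and \<Delta> :: "'i \<Rightarrow> ('f, 'p) fm set"
  assumes "I \<noteq> {}" and "directed I"
    and "\<And>i. i \<in> I \<Longrightarrow> is_theory (\<Delta> i)"
    and "\<And>i. i \<in> I \<Longrightarrow> consistent (\<Delta> i)"
    and "\<And>i. i \<in> I \<Longrightarrow> complete (\<Delta> i)"
  shows "consistent (lim_inf I \<Delta>) \<and> complete (lim_sup I \<Delta>)
    \<and> (consistent (lim_sup I \<Delta>) \<longleftrightarrow> complete (lim_inf I \<Delta>))
    \<and> (complete (lim_inf I \<Delta>) \<longleftrightarrow> lim_exists I \<Delta>)"
proof -
  note dir = assms(2)[unfolded directed_def]
  have notboth: "\<not> (\<theta> \<in> \<Delta> i \<and> Neg \<theta> \<in> \<Delta> i)" if "i \<in> I" for i \<theta>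
  proof
    assume h: "\<theta> \<in> \<Delta> i \<and> Neg \<theta> \<in> \<Delta> i"
    have "\<Delta> i \<turnstile> Bot"
      using h by (metis Neg_def derivable.hyp derivable.mp)
    then show False using assms(4)[OF that] unfolding consistent_def by blast
  qed
  have one: "Neg \<theta> \<in> \<Delta> i" if "i \<in> I" "\<theta> \<in> Sent" "\<theta> \<notin> \<Delta> i" for i \<theta>
    using assms(5)[OF that(1)] that unfolding complete_def by blast
  have subSent: "\<Delta> i \<subseteq> Sent" if "i \<in> I" for i
    using assms(3)[OF that] unfolding is_theory_def by blast
  have inf_sub: "lim_inf I \<Delta> \<subseteq> lim_sup I \<Delta>"
    unfolding lim_inf_def lim_sup_def
  proof safe
    fix \<theta> i i' assume "\<theta> \<in> Sent" "i \<in> I" "\<forall>j\<in>I. i \<le> j \<longrightarrow> \<theta> \<in> \<Delta> j" "i' \<in> I"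
    then show "\<exists>j\<in>I. i' \<le> j \<and> \<theta> \<in> \<Delta> j" using dir by blast
  qed
  have A: "consistent (lim_inf I \<Delta>)"
    unfolding consistent_def
  proof
    assume bot: "lim_inf I \<Delta> \<turnstile> Bot"
    have S: "lim_inf I \<Delta> \<subseteq> Sent" unfolding lim_inf_def by blast
    obtain G where G: "finite G" "G \<subseteq> lim_inf I \<Delta>" "G \<turnstile> Bot"
      using deriv_finite[OF bot S] by (elim exE conjE)
    have "\<forall>\<theta>\<in>G. \<exists>i\<in>I. \<forall>j\<in>I. i \<le> j \<longrightarrow> \<theta> \<in> \<Delta> j"
      using G(2) unfolding lim_inf_def by blast
    then have "\<forall>\<theta>\<in>G. \<exists>i. i \<in> I \<and> (\<forall>j\<in>I. i \<le> j \<longrightarrow> \<theta> \<in> \<Delta> j)" by blast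
    then obtain f where f: "\<forall>\<theta>\<in>G. f \<theta> \<in> I \<and> (\<forall>j\<in>I. f \<theta> \<le> j \<longrightarrow> \<theta> \<in> \<Delta> j)"
      by (rule bchoice[THEN exE])
    obtain k where k: "k \<in> I" "\<forall>i\<in>f ` G. i \<le> k"
      using directed_finite_ub[OF assms(1,2), of "f ` G"] G(1) f by blast
    have "G \<subseteq> \<Delta> k" using f k by blast
    then have "\<Delta> k \<turnstile> Bot" by (rule deriv_mono[OF G(3) _ subSent[OF k(1)]])
    then show False using assms(4)[OF k(1)] unfolding consistent_def by blast
  qed
  have B: "complete (lim_sup I \<Delta>)"
    unfolding complete_def
  proof
    fix \<theta> :: "('f,'p) fm" assume th: "\<theta> \<in> Sent"
    show "\<theta> \<in> lim_sup I \<Delta> \<or> Neg \<theta> \<in> lim_sup I \<Delta>"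
    proof (cases "\<theta> \<in> lim_sup I \<Delta>")
      case True then show ?thesis by blast
    next
      case False
      then obtain i where i: "i \<in> I" "\<forall>j\<in>I. i \<le> j \<longrightarrow> \<theta> \<notin> \<Delta> j"
        using th unfolding lim_sup_def by blast
      have "\<forall>i'\<in>I. \<exists>j\<in>I. i' \<le> j \<and> Neg \<theta> \<in> \<Delta> j"
      proof
        fix i' assume "i' \<in> I"
        then obtain k where k: "k \<in> I" "i \<le> k" "i' \<le> k" using dir i by blast
        then have "Neg \<theta> \<in> \<Delta> k" using i one[OF k(1) th] by blast
        then show "\<exists>j\<in>I. i' \<le> j \<and> Neg \<theta> \<in> \<Delta> j" using k by blast
      qed
      then have "Neg \<theta> \<in> lim_sup I \<Delta>"
        unfolding lim_sup_def using Neg_Sent[OF th] by blast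
      then show ?thesis by blast
    qed
  qed
  have C1: "lim_exists I \<Delta>" if "consistent (lim_sup I \<Delta>)"
  proof -
    have "lim_sup I \<Delta> \<subseteq> lim_inf I \<Delta>"
    proof
      fix \<theta> assume th: "\<theta> \<in> lim_sup I \<Delta>"
      then have thS: "\<theta> \<in> Sent" unfolding lim_sup_def by blast
      show "\<theta> \<in> lim_inf I \<Delta>"
      proof (rule ccontr)
        assume "\<theta> \<notin> lim_inf I \<Delta>"
        then have "\<forall>i\<in>I. \<exists>j\<in>I. i \<le> j \<and> \<theta> \<notin> \<Delta> j"
          using thS unfolding lim_inf_def by blast
        then have "\<forall>i\<in>I. \<exists>j\<in>I. i \<le> j \<and> Neg \<theta> \<in> \<Delta> j"
          using one[OF _ thS] by meson
        then have "Neg \<theta> \<in> lim_sup I \<Delta>"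
          using Neg_Sent[OF thS] unfolding lim_sup_def by blast
        then have "lim_sup I \<Delta> \<turnstile> Bot"
          using th by (metis Neg_def derivable.hyp derivable.mp)
        then show False using that unfolding consistent_def by blast
      qed
    qed
    then show ?thesis using inf_sub unfolding lim_exists_def by blast
  qed
  have C2: "lim_exists I \<Delta>" if "complete (lim_inf I \<Delta>)"
  proof -
    have "lim_sup I \<Delta> \<subseteq> lim_inf I \<Delta>"
    proof
      fix \<theta> assume th: "\<theta> \<in> lim_sup I \<Delta>"
      then have thS: "\<theta> \<in> Sent" unfolding lim_sup_def by blast
      show "\<theta> \<in> lim_inf I \<Delta>"
      proof (rule ccontr)
        assume "\<theta> \<notin> lim_inf I \<Delta>"
        then have "Neg \<theta> \<in> lim_inf I \<Delta>" using that thS unfolding complete_def by blast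
        then obtain i where i: "i \<in> I" "\<forall>j\<in>I. i \<le> j \<longrightarrow> Neg \<theta> \<in> \<Delta> j"
          unfolding lim_inf_def by blast
        obtain j where "j \<in> I" "i \<le> j" "\<theta> \<in> \<Delta> j" using th i unfolding lim_sup_def by blast
        then show False using i notboth by blast
      qed
    qed
    then show ?thesis using inf_sub unfolding lim_exists_def by blast
  qed
  have D: "consistent (lim_sup I \<Delta>)" if "lim_exists I \<Delta>"
    using A that unfolding lim_exists_def by simp
  have E: "complete (lim_inf I \<Delta>)" if "lim_exists I \<Delta>"
    using B that unfolding lim_exists_def by simp
  show ?thesis
    using A B C1 C2 D E by blast
qed

end
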